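(* Let $\lambda_{\max}>1$ and let $F:[0,\lambda_{\max}]\to\mathbb{R}_+$ be continuously differentiable with $F(0)=0$, such that (i) $F(x)<F^\star$ for all $x\in[0,1)$ and $F'(1)>0$; (ii) $F''$ exists and is continuous on $(0,\lambda_{\max})$ with $F''(1)<0$; (iii) $F^{(3)}$ and $F^{(4)}$ exist and are bounded on $[0,\lambda_{\max}]$; and (iv) $F$ is concave-like. Then there exist constants $C_1,C_2,\varepsilon_0>0$ (depending on $F$) such that for all $\varepsilon\in(0,\varepsilon_0]$, $$\frac{C_1}{\sqrt{\varepsilon}}\le q^\star(\varepsilon)\le\frac{C_2}{\sqrt{\varepsilon}}.$$
   Context: A control policy is a function $\lambda:\mathbb{Z}_+\to[0,\lambda_{\max}]$; it defines a continuous-time birth–death chain on $\mathbb{Z}_+$ with rate $\lambda(q)$ from $q$ to $q+1$ and rate $1$ from $q$ to $q-1$ ($q\ge1$). Let $\mathcal S$ be the set of states reachable from $0$. The policy is stable if $\sum_{i\in\mathcal S}\prod_{q=0}^{i}\lambda(q)<\infty$ (positive recurrence on $\mathcal S$); then $\pi$ is its stationary distribution and $\bar q\sim\pi$. $F^\star=\sup\{\mathbb{E}_\alpha[F(X)]:\alpha$ a probability measure on $[0,\lambda_{\max}]$, $X\sim\alpha$, $\mathbb{E}_\alpha[X]\le1\}$; regret $R(\lambda)=F^\star-\mathbb{E}_\pi[F(\lambda(\bar q))]$; $q^\star(\varepsilon)=\inf\{\mathbb{E}_\pi[\bar q]:\lambda$ stable, $R(\lambda)\le\varepsilon\}$. $F$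 is concave-like if for all $x_1,x_2\in[0,\lambda_{\max}]\setminus\{1\}$, $p\in(0,1)$ with $px_1+(1-p)x_2=1$, we have $F(1)>pF(x_1)+(1-p)F(x_2)$. *)

theory Defs
  imports "HOL-Probability.Probability"
begin

definition policy :: "real \<Rightarrow> (nat \<Rightarrow> real) \<Rightarrow> bool" where
  "policy lmax lam \<longleftrightarrow> (\<forall>q. 0 \<le> lam q \<and> lam q \<le> lmax)"

text \<open>States reachable from 0 in the birth-death chain (up-rate lam q, down-rate 1).\<close>
definition reach :: "(nat \<Rightarrow> real) \<Rightarrow> nat set" where
  "reach lam = {i. \<forall>q<i. lam q > 0}"

definition stable :: "(nat \<Rightarrow> real) \<Rightarrow> bool" where
  "stable lam \<longleftrightarrow> (\<lambda>i. \<Prod>q\<le>i. lam q) summable_on reach lam"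

text \<open>Stationary distribution of the chain on the reachable set (global balance equations).\<close>
definition stationary :: "(nat \<Rightarrow> real) \<Rightarrow> (nat \<Rightarrow> real) \<Rightarrow> bool" where
  "stationary lam p \<longleftrightarrow>
     (\<forall>i. 0 \<le> p i) \<and> (\<forall>i. i \<notin> reach lam \<longrightarrow> p i = 0) \<and> p sums 1 \<and>
     (\<forall>j\<in>reach lam. p j * (lam j + (if j = 0 then 0 else 1)) =
        (if j = 0 then 0 else p (j - 1) * lam (j - 1)) + p (Suc j))"

definition stat_dist :: "(nat \<Rightarrow> real) \<Rightarrow> nat \<Rightarrow> real" where
  "stat_dist lam = (THE p. stationary lam p)"

definition exp_queue :: "(nat \<Rightarrow> real) \<Rightarrow> ennreal" where
  "exp_queue lam = (\<Sum>i. ennreal (real i * stat_dist lam i))"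

definition exp_reward :: "(real \<Rightarrow> real) \<Rightarrow> (nat \<Rightarrow> real) \<Rightarrow> real" where
  "exp_reward F lam = (\<Sum>i. stat_dist lam i * F (lam i))"

definition Fstar :: "(real \<Rightarrow> real) \<Rightarrow> real \<Rightarrow> real" where
  "Fstar F lmax = Sup {(\<integral>x. F x \<partial>M) | M.
      prob_space M \<and> sets M = sets (restrict_space borel {0..lmax}) \<and> (\<integral>x. x \<partial>M) \<le> 1}"

definition regret :: "(real \<Rightarrow> real) \<Rightarrow> real \<Rightarrow> (nat \<Rightarrow> real) \<Rightarrow> real" where
  "regret F lmax lam = Fstar F lmax - exp_reward F lam"

definition qstar :: "(real \<Rightarrow> real) \<Rightarrow> real \<Rightarrow> real \<Rightarrow> ennreal" where
  "qstar F lmax eps = (INF lam \<in> {lam. policy lmax lam \<and> stable lam \<and> regret F lmax lam \<le> eps}.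
      exp_queue lam)"

definition concave_like :: "(real \<Rightarrow> real) \<Rightarrow> real \<Rightarrow> bool" where
  "concave_like F lmax \<longleftrightarrow>
     (\<forall>x1\<in>{0..lmax} - {1}. \<forall>x2\<in>{0..lmax} - {1}. \<forall>p\<in>{0<..<1}.
        p * x1 + (1 - p) * x2 = 1 \<longrightarrow> F 1 > p * F x1 + (1 - p) * F x2)"

end

theory Submission
  imports Defs
begin


lemma reach_Suc: "Suc j \<in> reach lam \<Longrightarrow> j \<in> reach lam"
  unfolding reach_def by auto

lemma stationary_detailed:
  assumes "stationary lam p"
  shows "p (Suc j) = p j * lam j"
proof (induction j)
  case 0
  have "0 \<in> reach lam" unfolding reach_def by auto
  then show ?case using assms unfolding stationary_def by force
next
  case (Suc j)
  show ?case
  proof (cases "Suc j \<in> reach lam")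
    case True
    then have "p (Suc j) * (lam (Suc j) + 1) = p j * lam j + p (Suc (Suc j))"
      using assms unfolding stationary_def by force
    then show ?thesis using Suc by (simp add: algebra_simps)
  next
    case False
    then have "Suc (Suc j) \<notin> reach lam" using reach_Suc by blast
    then show ?thesis using False assms unfolding stationary_def by auto
  qed
qed

lemma stationary_prod:
  assumes "stationary lam p"
  shows "p q = p 0 * (\<Prod>j<q. lam j)"
  by (induction q) (auto simp: stationary_detailed[OF assms])

lemma stationary_unique:
  assumes "stationary lam p" "stationary lam p'"
  shows "p = p'"
proof -
  define g where "g q = (\<Prod>j<q. lam j)" for q
  have pq: "p q = p 0 * g q" for q unfolding g_def by (rule stationary_prod[OF assms(1)])
  have pq': "p' q = p' 0 * g q" for q unfolding g_def by (rule stationary_prod[OF assms(2)])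
  have "p sums 1" "p' sums 1" using assms unfolding stationary_def by blast+
  moreover have "p = (\<lambda>q. p 0 * g q)" "p' = (\<lambda>q. p' 0 * g q)"
    using pq pq' by blast+
  ultimately have s1: "(\<lambda>q. p 0 * g q) sums 1" and s2: "(\<lambda>q. p' 0 * g q) sums 1"
    by metis+
  have "p 0 \<noteq> 0"
  proof
    assume "p 0 = 0" then have "(\<lambda>q. 0::real) sums 1" using s1 by simp
    then show False by (metis sums_zero sums_unique2 zero_neq_one)
  qed
  have "p' 0 \<noteq> 0"
  proof
    assume "p' 0 = 0" then have "(\<lambda>q. 0::real) sums 1" using s2 by simp
    then show False by (metis sums_zero sums_unique2 zero_neq_one)
  qed
  have "g sums (1 / p 0)" using sums_mult[OF s1, of "1 / p 0"] \<open>p 0 \<noteq> 0\<close> by simp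
  moreover have "g sums (1 / p' 0)" using sums_mult[OF s2, of "1 / p' 0"] \<open>p' 0 \<noteq> 0\<close> by simp
  ultimately have "1 / p 0 = 1 / p' 0" using sums_unique2 by blast
  then have "p 0 = p' 0" by simp
  then show ?thesis using pq pq' by (intro ext) metis
qed

lemma stationary_exists:
  assumes pol: "policy lmax lam" and st: "stable lam"
  shows "stationary lam (\<lambda>q. (\<Prod>j<q. lam j) / (\<Sum>i. \<Prod>j<i. lam j))"
proof -
  define g where "g q = (\<Prod>j<q. lam j)" for q
  have lam0: "\<And>j. 0 \<le> lam j" using pol unfolding policy_def by auto
  have g0: "\<And>q. 0 \<le> g q" unfolding g_def using lam0 by (simp add: prod_nonneg)
  have gz: "g q = 0" if "q \<notin> reach lam" for q
  proof -
    have "\<exists>j<q. \<not> lam j > 0" using that unfolding reach_def by blast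
    then obtain j where "j < q" "\<not> lam j > 0" by blast
    then have "lam j = 0" using lam0[of j] by auto
    then show ?thesis unfolding g_def using \<open>j < q\<close> using \<open>lam j = 0\<close> by (metis finite_lessThan lessThan_iff prod_zero_iff)
  qed
  have gS: "g (Suc i) = (\<Prod>q\<le>i. lam q)" for i
    unfolding g_def using lessThan_Suc_atMost by simp
  have "(\<lambda>i. g (Suc i)) summable_on reach lam"
    using st unfolding stable_def gS by simp
  moreover have "(\<lambda>i. g (Suc i)) summable_on UNIV \<longleftrightarrow> (\<lambda>i. g (Suc i)) summable_on reach lam"
  proof (rule summable_on_cong_neutral)
    fix x assume "x \<in> UNIV - reach lam"
    then have "Suc x \<notin> reach lam" using reach_Suc by blast
    then show "g (Suc x) = 0" by (rule gz)
  qed auto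
  ultimately have "(\<lambda>i. g (Suc i)) summable_on UNIV" by (rule iffD2[rotated])
  then have "summable (\<lambda>i. g (Suc i))"
    by (rule summable_on_UNIV_nonneg_real_iff[THEN iffD1, rotated]) (rule g0)
  then have sg: "summable g" by (rule summable_Suc_iff[THEN iffD1])
  define S where "S = suminf g"
  have "g 0 \<le> S" unfolding S_def using sg g0
    using sum_le_suminf[OF sg, of "{0}"] by simp
  then have S1: "S \<ge> 1" by (simp add: g_def)
  show ?thesis
    unfolding stationary_def g_def[symmetric] S_def[symmetric]
  proof (intro conjI allI impI ballI)
    fix i show "0 \<le> g i / S" using g0 S1 by simp
  next
    fix i assume "i \<notin> reach lam" then show "g i / S = 0" using gz by simp
  next
    show "(\<lambda>q. g q / S) sums 1"
      using sums_divide[OF summable_sums[OF sg], of S] S1 unfolding S_def by simp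
  next
    fix j
    have gs: "g (Suc k) = g k * lam k" for k unfolding g_def by simp
    show "g j / S * (lam j + (if j = 0 then 0 else 1)) =
        (if j = 0 then 0 else g (j - 1) / S * lam (j - 1)) + g (Suc j) / S"
    proof (cases j)
      case 0 then show ?thesis by (simp add: gs)
    next
      case (Suc k)
      have "g (Suc k) / S * (lam (Suc k) + 1) = g k / S * lam k + g (Suc (Suc k)) / S"
        using S1 by (simp add: gs divide_simps) (simp add: algebra_simps)
      then show ?thesis using Suc by simp
    qed
  qed
qed

lemma stat_dist_stationary:
  assumes "policy lmax lam" "stable lam"
  shows "stationary lam (stat_dist lam)"
proof -
  let ?P = "\<lambda>q. (\<Prod>j<q. lam j) / (\<Sum>i. \<Prod>j<i. lam j)"
  have "stat_dist lam = ?P"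
    unfolding stat_dist_def
    by (rule the_equality[where P="stationary lam", OF stationary_exists[OF assms]]) (erule stationary_unique[OF _ stationary_exists[OF assms]])
  then show ?thesis using stationary_exists[OF assms] by simp
qed


lemma Fstar_eq:
  fixes F :: "real \<Rightarrow> real" and c lmax :: real
  assumes lm: "1 \<le> lmax" and Fc: "continuous_on {0..lmax} F" and c0: "c \<ge> 0"
    and Fnn: "\<forall>x\<in>{0..lmax}. F x \<ge> 0"
    and line: "\<forall>x\<in>{0..lmax}. F x \<le> F 1 + c * (x - 1)"
  shows "Fstar F lmax = F 1"
proof -
  let ?R = "restrict_space borel {0..lmax} :: real measure"
  let ?S = "{(\<integral>x. F x \<partial>M) | M. prob_space M \<and> sets M = sets ?R \<and> (\<integral>x. x \<partial>M) \<le> 1}"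
  have spR: "space ?R = {0..lmax}" by (simp add: space_restrict_space)
  have FmR: "F \<in> borel_measurable ?R" by (rule borel_measurable_continuous_on_restrict[OF Fc])
  have idR: "(\<lambda>x. x) \<in> borel_measurable ?R" by (rule borel_measurable_continuous_on_restrict) (rule continuous_on_id)
  have 1: "F 1 \<in> ?S"
  proof -
    let ?M = "return ?R 1"
    have one: "(1::real) \<in> space ?R" using lm spR by simp
    have "prob_space ?M" by (rule prob_space_return[OF one])
    moreover have "sets ?M = sets ?R" by simp
    moreover have "(\<integral>x. x \<partial>?M) = 1" by (rule integral_return[OF one idR])
    moreover have "(\<integral>x. F x \<partial>?M) = F 1" by (rule integral_return[OF one FmR])
    ultimately show ?thesis by (smt (verit) mem_Collect_eq)
  qed
  have 2: "y \<le> F 1" if "y \<in> ?S" for y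
  proof -
    obtain M where M: "prob_space M" "sets M = sets ?R" "(\<integral>x. x \<partial>M) \<le> 1"
      and y: "y = (\<integral>x. F x \<partial>M)" using \<open>y \<in> ?S\<close> by blast
    interpret prob_space M by (rule M(1))
    have sp: "space M = {0..lmax}" using sets_eq_imp_space_eq[OF M(2)] spR by simp
    have FM: "F \<in> borel_measurable M" using FmR measurable_cong_sets[OF M(2), of borel borel] by metis
    have idM: "(\<lambda>x. x) \<in> borel_measurable M" using idR measurable_cong_sets[OF M(2), of borel borel] by metis
    have iF: "integrable M F"
    proof (rule integrable_const_bound[where B="F 1 + c * lmax"])
      show "AE x in M. norm (F x) \<le> F 1 + c * lmax"
      proof (rule AE_I2)
        fix x assume "x \<in> space M"
        then have x: "x \<in> {0..lmax}" using sp by simp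
        then have "F x \<le> F 1 + c * (x - 1)" using line by blast
        also have "\<dots> \<le> F 1 + c * lmax" using x c0 by (simp add: mult_left_mono)
        finally show "norm (F x) \<le> F 1 + c * lmax" using Fnn x by simp
      qed
    qed (rule FM)
    have iid: "integrable M (\<lambda>x. x)"
    proof (rule integrable_const_bound[where B="lmax"])
      show "AE x in M. norm x \<le> lmax"
        by (rule AE_I2) (use sp in auto)
    qed (rule idM)
    have "y \<le> (\<integral>x. F 1 + c * (x - 1) \<partial>M)"
      unfolding y
      by (rule integral_mono[OF iF]) (use iid line sp in auto)
    also have "(\<integral>x. F 1 + c * (x - 1) \<partial>M) = F 1 + c * ((\<integral>x. x \<partial>M) - 1)"
    proof -
      have "(\<integral>x. F 1 + c * (x - 1) \<partial>M) = (\<integral>x. (F 1 - c) + c * x \<partial>M)"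
        by (simp add: algebra_simps)
      also have "\<dots> = (F 1 - c) + c * (\<integral>x. x \<partial>M)"
        using iid by (simp add: prob_space)
      finally show ?thesis by (simp add: algebra_simps)
    qed
    also have "\<dots> \<le> F 1" using M(3) c0 by (simp add: mult_nonneg_nonpos)
    finally show ?thesis .
  qed
  have "Sup ?S = F 1" by (rule cSup_eq_maximum[OF 1]) (use 2 in blast)
  then show ?thesis unfolding Fstar_def by simp
qed


lemma taylor_up:
  fixes f f' f'' :: "real \<Rightarrow> real" and c r A x :: real
  assumes d1: "\<And>t. \<bar>t - c\<bar> < r \<Longrightarrow> (f has_real_derivative f' t) (at t)"
    and d2: "\<And>t. \<bar>t - c\<bar> < r \<Longrightarrow> (f' has_real_derivative f'' t) (at t)"
    and b: "\<And>t. \<bar>t - c\<bar> < r \<Longrightarrow> f'' t \<le> 2 * A"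
    and x: "\<bar>x - c\<bar> < r"
  shows "f x \<le> f c + f' c * (x - c) + A * (x - c)^2"
proof -
  define k where "k t = f t - f c - f' c * (t - c) - A * (t - c)^2" for t
  define k' where "k' t = f' t - f' c - 2 * A * (t - c)" for t
  have dk: "(k has_real_derivative k' t) (at t)" if "\<bar>t - c\<bar> < r" for t
    unfolding k_def k'_def
    by (auto intro!: derivative_eq_intros d1[OF that] simp: power2_eq_square algebra_simps)
  have ks: "k' z * (z - c) \<le> 0" if z: "\<bar>z - c\<bar> < r" for z
  proof (cases "z = c")
    case True then show ?thesis by simp
  next
    case False
    show ?thesis
    proof (cases "c < z")
      case True
      have "\<exists>w>c. w < z \<and> f' z - f' c = (z - c) * f'' w"
        by (rule MVT2[OF True]) (rule d2, use z in auto)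
      then obtain w where w: "c < w" "w < z" "f' z - f' c = (z - c) * f'' w" by blast
      have "f'' w \<le> 2 * A" using b[of w] w z by auto
      then have "k' z = (z - c) * (f'' w - 2 * A)" unfolding k'_def using w by (simp add: algebra_simps)
      then show ?thesis using True \<open>f'' w \<le> 2 * A\<close>
        by (simp add: mult_nonneg_nonpos mult_le_0_iff)
    next
      case False
      then have zc: "z < c" using \<open>z \<noteq> c\<close> by simp
      have "\<exists>w>z. w < c \<and> f' c - f' z = (c - z) * f'' w"
        by (rule MVT2[OF zc]) (rule d2, use z in auto)
      then obtain w where w: "z < w" "w < c" "f' c - f' z = (c - z) * f'' w" by blast
      have "f'' w \<le> 2 * A" using b[of w] w z by auto
      have kz: "k' z = (z - c) * (f'' w - 2 * A)" unfolding k'_def using w by (simp add: algebra_simps)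
      have "k' z * (z - c) = (z - c)^2 * (f'' w - 2 * A)" unfolding kz by (simp add: power2_eq_square mult_ac)
      then show ?thesis using \<open>f'' w \<le> 2 * A\<close> by (simp add: mult_nonneg_nonpos)
    qed
  qed
  have "k x \<le> 0"
  proof (cases "x = c")
    case True then show ?thesis by (simp add: k_def)
  next
    case False
    show ?thesis
    proof (cases "c < x")
      case True
      have "\<exists>z>c. z < x \<and> k x - k c = (x - c) * k' z"
        by (rule MVT2[OF True]) (rule dk, use x in auto)
      then obtain z where z: "c < z" "z < x" "k x - k c = (x - c) * k' z" by blast
      have "k' z * (z - c) \<le> 0" using ks[of z] z x by auto
      then have "k' z \<le> 0" using z by (simp add: mult_le_0_iff)
      then show ?thesis using z True by (simp add: k_def mult_nonneg_nonpos)
    next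
      case False
      then have xc: "x < c" using \<open>x \<noteq> c\<close> by simp
      have "\<exists>z>x. z < c \<and> k c - k x = (c - x) * k' z"
        by (rule MVT2[OF xc]) (rule dk, use x in auto)
      then obtain z where z: "x < z" "z < c" "k c - k x = (c - x) * k' z" by blast
      have "k' z * (z - c) \<le> 0" using ks[of z] z x by auto
      then have "k' z \<ge> 0" using z by (simp add: mult_le_0_iff)
      then have "k c - k x \<ge> 0" using z xc by simp
      then show ?thesis by (simp add: k_def)
    qed
  qed
  then show ?thesis unfolding k_def by simp
qed

lemma limit_le:
  fixes a b C r :: real
  assumes "r > 0" "C \<ge> 0" "\<And>d. 0 < d \<Longrightarrow> d \<le> r \<Longrightarrow> a < b + C * d"
  shows "a \<le> b"
proof (rule ccontr)
  assume "\<not> a \<le> b"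
  then have g: "a - b > 0" by simp
  define d where "d = min r ((a - b) / (C + 1))"
  have d0: "0 < d" using assms g by (simp add: d_def)
  have "d \<le> r" by (simp add: d_def)
  have "C * d \<le> C * ((a - b) / (C + 1))" unfolding d_def by (intro mult_left_mono min.cobounded2 assms(2))
  also have "\<dots> \<le> (a - b)" using assms g by (simp add: field_simps)
  finally have "C * d \<le> a - b" .
  then show False using assms(3)[OF d0 \<open>d \<le> r\<close>] by simp
qed

lemma near_one:
  fixes F F' F'' :: "real \<Rightarrow> real" and lmax :: real
  assumes lm: "lmax > 1"
    and Fd: "\<forall>x\<in>{0..lmax}. (F has_real_derivative F' x) (at x within {0..lmax})"
    and F'd: "\<forall>x\<in>{0<..<lmax}. (F' has_real_derivative F'' x) (at x)"
    and F''c: "continuous_on {0<..<lmax} F''"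
    and F''1: "F'' 1 < 0"
  shows "\<exists>r>0. r < 1 \<and> 1 + r < lmax \<and> (\<forall>x. \<bar>x - 1\<bar> \<le> r \<longrightarrow>
     F 1 + F' 1 * (x - 1) - (3 * (- F'' 1) / 4) * (x - 1)^2 \<le> F x \<and>
     F x \<le> F 1 + F' 1 * (x - 1) - ((- F'' 1) / 4) * (x - 1)^2)"
proof -
  define m where "m = - F'' 1"
  have m0: "m > 0" using F''1 by (simp add: m_def)
  have "isCont F'' 1"
    using F''c lm by (simp add: continuous_on_eq_continuous_at)
  then have "F'' \<midarrow>1\<rightarrow> F'' 1" by (simp add: isCont_def)
  then obtain d where d: "d > 0" "\<And>x. x \<noteq> 1 \<Longrightarrow> norm (x - 1) < d \<Longrightarrow> norm (F'' x - F'' 1) < m / 2"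
    using m0 LIM_D[of F'' "F'' 1" 1 "m/2"] by auto
  define R where "R = min d (min 1 (lmax - 1))"
  have R0: "R > 0" using d lm by (simp add: R_def)
  have inI: "t \<in> {0<..<lmax}" if "\<bar>t - 1\<bar> < R" for t
    using that by (auto simp: R_def abs_less_iff)
  have bF'': "- 3 * m / 2 \<le> F'' t \<and> F'' t \<le> - m / 2" if "\<bar>t - 1\<bar> < R" for t
  proof (cases "t = 1")
    case True then show ?thesis using m0 by (simp add: m_def)
  next
    case False
    have "\<bar>t - 1\<bar> < d" using that by (simp add: R_def)
    then have "\<bar>F'' t - F'' 1\<bar> < m / 2" using d(2)[OF False] by simp
    then show ?thesis by (simp add: m_def abs_less_iff)
  qed
  have dF: "(F has_real_derivative F' t) (at t)" if "\<bar>t - 1\<bar> < R" for t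
  proof -
    have t: "0 < t" "t < lmax" using inI[OF that] by auto
    have "(F has_real_derivative F' t) (at t within {0..lmax})" using Fd t by auto
    then show ?thesis using at_within_Icc_at[OF t] by simp
  qed
  have dF': "(F' has_real_derivative F'' t) (at t)" if "\<bar>t - 1\<bar> < R" for t
    using F'd inI[OF that] by blast
  define r where "r = R / 2"
  have "R \<le> lmax - 1" "R \<le> 1" by (auto simp: R_def)
  then have r: "r > 0" "r < 1" "1 + r < lmax" using R0 lm by (auto simp: r_def)
  have up: "F x \<le> F 1 + F' 1 * (x - 1) - (m / 4) * (x - 1)^2" if "\<bar>x - 1\<bar> < R" for x
    using taylor_up[of 1 R F F' F'' "- m / 4" x] dF dF' bF'' that by auto
  have lo: "F 1 + F' 1 * (x - 1) - (3 * m / 4) * (x - 1)^2 \<le> F x" if "\<bar>x - 1\<bar> < R" for x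
  proof -
    have "(\<lambda>t. - F t) x \<le> (\<lambda>t. - F t) 1 + (\<lambda>t. - F' t) 1 * (x - 1) + (3 * m / 4) * (x - 1)^2"
    proof (rule taylor_up[of 1 R _ _ "\<lambda>t. - F'' t"])
      fix t assume t: "\<bar>t - 1\<bar> < R"
      show "((\<lambda>t. - F t) has_real_derivative - F' t) (at t)" using dF[OF t] by (rule DERIV_minus)
      show "((\<lambda>t. - F' t) has_real_derivative - F'' t) (at t)" using dF'[OF t] by (rule DERIV_minus)
      show "- F'' t \<le> 2 * (3 * m / 4)" using bF''[OF t] by simp
    qed (rule that)
    then show ?thesis by simp
  qed
  show ?thesis unfolding m_def[symmetric]
  proof (intro exI[of _ r] conjI r allI impI)
    fix x assume "\<bar>x - 1\<bar> \<le> r"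
    then have "\<bar>x - 1\<bar> < R" using R0 by (simp add: r_def)
    then show "F 1 + F' 1 * (x - 1) - (3 * m / 4) * (x - 1)^2 \<le> F x" "F x \<le> F 1 + F' 1 * (x - 1) - (m / 4) * (x - 1)^2"
      using up lo by auto
  qed
qed

lemma chord:
  fixes F :: "real \<Rightarrow> real"
  assumes cl: "concave_like F lmax" and x: "0 \<le> x1" "x1 < 1" "1 < x2" "x2 \<le> lmax"
  shows "(F 1 - F x1) * (x2 - 1) > (F x2 - F 1) * (1 - x1)"
proof -
  define D where "D = x2 - x1"
  have D0: "D > 0" using x by (simp add: D_def)
  define p where "p = (x2 - 1) / D"
  have p: "p \<in> {0<..<1}" using x D0 by (auto simp: p_def D_def field_simps)
  have 1: "1 - p = (1 - x1) / D" using D0 by (simp add: p_def D_def field_simps)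
  have e: "(x2 - 1) * x1 + (1 - x1) * x2 = D" unfolding D_def by (simp add: algebra_simps)
  have "p * x1 + (1 - p) * x2 = ((x2 - 1) * x1 + (1 - x1) * x2) / D"
    by (simp only: 1) (simp add: p_def add_divide_distrib)
  then have "p * x1 + (1 - p) * x2 = 1" using e D0 by simp
  moreover have "x1 \<in> {0..lmax} - {1}" "x2 \<in> {0..lmax} - {1}" using x by auto
  ultimately have "F 1 > p * F x1 + (1 - p) * F x2" using cl p unfolding concave_like_def by blast
  then have "F 1 > ((x2 - 1) * F x1 + (1 - x1) * F x2) / D" unfolding 1 by (simp add: p_def add_divide_distrib)
  then have "D * F 1 > (x2 - 1) * F x1 + (1 - x1) * F x2" using D0 by (simp add: field_simps)
  then show ?thesis unfolding D_def by (simp add: algebra_simps)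
qed

lemma support_line:
  fixes F F' :: "real \<Rightarrow> real"
  assumes lm: "lmax > 1" and r: "0 < r" "r < 1" "1 + r < lmax" and K: "K \<ge> 0"
    and lo: "\<forall>x. \<bar>x - 1\<bar> \<le> r \<longrightarrow> F 1 + F' 1 * (x - 1) - K * (x - 1)^2 \<le> F x"
    and up: "\<forall>x. \<bar>x - 1\<bar> \<le> r \<longrightarrow> F x \<le> F 1 + F' 1 * (x - 1)"
    and cl: "concave_like F lmax"
  shows "\<forall>x\<in>{0..lmax}. F x \<le> F 1 + F' 1 * (x - 1)"
proof
  fix x assume x: "x \<in> {0..lmax}"
  show "F x \<le> F 1 + F' 1 * (x - 1)"
  proof (cases "\<bar>x - 1\<bar> \<le> r")
    case True then show ?thesis using up by blast
  next
    case False
    show ?thesis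
    proof (cases "x < 1")
      case True
      show ?thesis
      proof (rule limit_le[OF r(1), of "(1 - x) * K"])
        show "0 \<le> (1 - x) * K" using True K by simp
      next
        fix d assume d: "0 < d" "d \<le> r"
        have c: "(F 1 - F x) * (1 + d - 1) > (F (1 + d) - F 1) * (1 - x)"
          by (rule chord[OF cl]) (use x True d r in auto)
        have "F (1 + d) \<ge> F 1 + F' 1 * d - K * d^2" using lo[rule_format, of "1 + d"] d by simp
        then have "(F (1 + d) - F 1) * (1 - x) \<ge> (F' 1 * d - K * d^2) * (1 - x)"
          using True by (intro mult_right_mono) auto
        with c have "d * (F 1 - F x) > d * ((F' 1 - K * d) * (1 - x))"
          by (simp add: power2_eq_square algebra_simps)
        then have "F 1 - F x > (F' 1 - K * d) * (1 - x)" using d by simp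
        then show "F x < F 1 + F' 1 * (x - 1) + (1 - x) * K * d" by (simp add: algebra_simps)
      qed
    next
      case False
      then have x1: "x > 1" using \<open>\<not> \<bar>x - 1\<bar> \<le> r\<close> r by auto
      show ?thesis
      proof (rule limit_le[OF r(1), of "(x - 1) * K"])
        show "0 \<le> (x - 1) * K" using x1 K by simp
      next
        fix d assume d: "0 < d" "d \<le> r"
        have c: "(F 1 - F (1 - d)) * (x - 1) > (F x - F 1) * (1 - (1 - d))"
          by (rule chord[OF cl]) (use x x1 d r in auto)
        have "F (1 - d) \<ge> F 1 - F' 1 * d - K * d^2" using lo[rule_format, of "1 - d"] d by simp
        then have "(F 1 - F (1 - d)) * (x - 1) \<le> (F' 1 * d + K * d^2) * (x - 1)"
          using x1 by (intro mult_right_mono) auto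
        with c have "d * (F x - F 1) < d * ((F' 1 + K * d) * (x - 1))"
          by (simp add: power2_eq_square algebra_simps)
        then have "F x - F 1 < (F' 1 + K * d) * (x - 1)" using d by simp
        then show "F x < F 1 + F' 1 * (x - 1) + (x - 1) * K * d" by (simp add: algebra_simps)
      qed
    qed
  qed
qed

lemma side_gap:
  fixes F F' :: "real \<Rightarrow> real"
  assumes lm: "lmax > 1" and r: "0 < r" "r < 1" "1 + r < lmax" and a: "a > 0"
    and Fc: "continuous_on {0..lmax} F"
    and upq: "\<forall>x. \<bar>x - 1\<bar> \<le> r \<longrightarrow> F x \<le> F 1 + F' 1 * (x - 1) - a * (x - 1)^2"
    and supp: "\<forall>x\<in>{0..lmax}. F x \<le> F 1 + F' 1 * (x - 1)"
    and cl: "concave_like F lmax"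
  shows "\<exists>c>0. (\<forall>x\<in>{0..1}. F x \<le> F 1 + F' 1 * (x - 1) - c * (x - 1)^2) \<or>
               (\<forall>x\<in>{1..lmax}. F x \<le> F 1 + F' 1 * (x - 1) - c * (x - 1)^2)"
proof -
  define G where "G x = F 1 + F' 1 * (x - 1) - F x" for x
  have Gc: "continuous_on {0..lmax} G" unfolding G_def by (intro continuous_intros Fc)
  have G0: "G x \<ge> 0" if "x \<in> {0..lmax}" for x using supp that by (simp add: G_def)
  have "continuous_on {0..1-r} G" by (rule continuous_on_subset[OF Gc]) (use r lm in auto)
  then obtain x0 where x0: "x0 \<in> {0..1-r}" "\<And>y. y \<in> {0..1-r} \<Longrightarrow> G x0 \<le> G y"
    using continuous_attains_inf[of "{0..1-r}" G] r by auto
  have "continuous_on {1+r..lmax} G" by (rule continuous_on_subset[OF Gc]) (use r lm in auto)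
  then obtain y0 where y0: "y0 \<in> {1+r..lmax}" "\<And>y. y \<in> {1+r..lmax} \<Longrightarrow> G y0 \<le> G y"
    using continuous_attains_inf[of "{1+r..lmax}" G] r by auto
  show ?thesis
  proof (cases "G x0 > 0")
    case True
    define c where "c = min a (G x0)"
    have c0: "c > 0" using True a by (simp add: c_def)
    have "\<forall>x\<in>{0..1}. F x \<le> F 1 + F' 1 * (x - 1) - c * (x - 1)^2"
    proof
      fix x :: real assume x: "x \<in> {0..1}"
      have "\<bar>x - 1\<bar> \<le> 1" using x by auto
      then have sq: "(x - 1)^2 \<le> 1" by (metis abs_le_square_iff abs_one one_power2)
      show "F x \<le> F 1 + F' 1 * (x - 1) - c * (x - 1)^2"
      proof (cases "\<bar>x - 1\<bar> \<le> r")
        case True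
        have "c * (x - 1)^2 \<le> a * (x - 1)^2" by (intro mult_right_mono) (auto simp: c_def)
        then show ?thesis using upq True by force
      next
        case False
        then have "x \<in> {0..1-r}" using x by auto
        then have "G x \<ge> G x0" by (rule x0(2))
        moreover have "c * (x - 1)^2 \<le> c" using sq c0 by (simp add: mult_left_le)
        moreover have "c \<le> G x0" by (simp add: c_def)
        ultimately show ?thesis by (simp add: G_def)
      qed
    qed
    then show ?thesis using c0 by blast
  next
    case False
    then have gx0: "G x0 \<le> 0" by simp
    show ?thesis
    proof (cases "G y0 > 0")
      case True
      define c where "c = min a (G y0 / (lmax - 1)^2)"
      have c0: "c > 0" using True a lm by (simp add: c_def)
      have "\<forall>x\<in>{1..lmax}. F x \<le> F 1 + F' 1 * (x - 1) - c * (x - 1)^2"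
      proof
        fix x :: real assume x: "x \<in> {1..lmax}"
        show "F x \<le> F 1 + F' 1 * (x - 1) - c * (x - 1)^2"
        proof (cases "\<bar>x - 1\<bar> \<le> r")
          case True
          have "c * (x - 1)^2 \<le> a * (x - 1)^2" by (intro mult_right_mono) (auto simp: c_def)
          then show ?thesis using upq True by force
        next
          case False
          then have "x \<in> {1+r..lmax}" using x by auto
          then have "G x \<ge> G y0" by (rule y0(2))
          have sq: "(x - 1)^2 \<le> (lmax - 1)^2" using x by (intro power_mono) auto
          have "c * (x - 1)^2 \<le> (G y0 / (lmax - 1)^2) * (lmax - 1)^2"
            by (intro mult_mono sq) (use c0 True in \<open>auto simp: c_def\<close>)
          also have "\<dots> = G y0" using lm by simp
          finally show ?thesis using \<open>G x \<ge> G y0\<close> by (simp add: G_def)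
        qed
      qed
      then show ?thesis using c0 by blast
    next
      case False
      then have gy0: "G y0 \<le> 0" by simp
      have c: "(F 1 - F x0) * (y0 - 1) > (F y0 - F 1) * (1 - x0)"
        by (rule chord[OF cl]) (use x0 y0 r in auto)
      have "F 1 - F x0 \<le> F' 1 * (1 - x0)" using gx0 by (simp add: G_def algebra_simps)
      then have "(F 1 - F x0) * (y0 - 1) \<le> F' 1 * (1 - x0) * (y0 - 1)"
        using y0 r by (intro mult_right_mono) auto
      moreover have "F y0 - F 1 \<ge> F' 1 * (y0 - 1)" using gy0 by (simp add: G_def algebra_simps)
      then have "(F y0 - F 1) * (1 - x0) \<ge> F' 1 * (y0 - 1) * (1 - x0)"
        using x0 r by (intro mult_right_mono) auto
      ultimately have False using c by (simp add: algebra_simps)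
      then show ?thesis ..
    qed
  qed
qed

lemma lower_quad:
  fixes F F' :: "real \<Rightarrow> real"
  assumes lm: "lmax > 1" and r: "0 < r" and K: "K \<ge> 0" and i2: "F' 1 > 0"
    and Fnn: "\<forall>x\<in>{0..lmax}. F x \<ge> 0"
    and lo: "\<forall>x. \<bar>x - 1\<bar> \<le> r \<longrightarrow> F 1 + F' 1 * (x - 1) - K * (x - 1)^2 \<le> F x"
  shows "\<exists>K'\<ge>0. \<forall>x\<in>{0..lmax}. F 1 + F' 1 * (x - 1) - K' * (x - 1)^2 \<le> F x"
proof -
  define B where "B = F 1 + F' 1 * lmax"
  have F1: "F 1 \<ge> 0" using Fnn lm by auto
  have B0: "B \<ge> 0" using F1 i2 lm by (simp add: B_def)
  define K' where "K' = max K (B / r^2)"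
  have "\<forall>x\<in>{0..lmax}. F 1 + F' 1 * (x - 1) - K' * (x - 1)^2 \<le> F x"
  proof
    fix x :: real assume x: "x \<in> {0..lmax}"
    show "F 1 + F' 1 * (x - 1) - K' * (x - 1)^2 \<le> F x"
    proof (cases "\<bar>x - 1\<bar> \<le> r")
      case True
      have "K * (x - 1)^2 \<le> K' * (x - 1)^2" by (intro mult_right_mono) (auto simp: K'_def)
      then show ?thesis using lo True by force
    next
      case False
      then have "r^2 \<le> (x - 1)^2" using r by (simp add: abs_le_square_iff[symmetric])
      then have "(B / r^2) * r^2 \<le> K' * (x - 1)^2"
        by (intro mult_mono) (use B0 r K in \<open>auto simp: K'_def\<close>)
      then have "B \<le> K' * (x - 1)^2" using r by simp
      moreover have "F' 1 * (x - 1) \<le> F' 1 * lmax" using x i2 by (intro mult_left_mono) auto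
      moreover have "F x \<ge> 0" using Fnn x by blast
      ultimately show ?thesis by (simp add: B_def)
    qed
  qed
  moreover have "K' \<ge> 0" using K by (simp add: K'_def)
  ultimately show ?thesis by blast
qed


lemma cs_sum:
  fixes b :: "nat \<Rightarrow> real"
  shows "(\<Sum>i\<in>I. b i)^2 \<le> real (card I) * (\<Sum>i\<in>I. (b i)^2)"
  using Cauchy_Schwarz_ineq_sum[of "\<lambda>_. 1" b I] by simp

lemma up_bound:
  fixes p lam :: "nat \<Rightarrow> real" and D :: real and N :: nat
  assumes p0: "\<And>j. p j \<ge> 0" and l0: "\<And>j. lam j \<ge> 0"
    and det: "\<And>j. p (Suc j) = p j * lam j"
    and D: "\<And>n. (\<Sum>j<n. p j * (max (lam j - 1) 0)^2) \<le> D"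
  shows "(\<Sum>q<N. p q) \<le> 2 * real N * p 0 + 2 * real N ^ 2 * D"
proof -
  define u where "u j = sqrt (p j)" for j
  define a where "a j = max (u (Suc j) - u j) 0" for j
  have uS: "u (Suc j) = u j * sqrt (lam j)" for j unfolding u_def det by (rule real_sqrt_mult)
  have u0: "u j \<ge> 0" for j by (simp add: u_def p0)
  have a0: "a j \<ge> 0" for j by (simp add: a_def)
  have a2: "(a j)^2 \<le> p j * (max (lam j - 1) 0)^2" for j
  proof (cases "lam j \<ge> 1")
    case True
    have s1: "sqrt (lam j) \<ge> 1" using True by simp
    have s2: "sqrt (lam j) \<le> lam j" using True by (metis real_sqrt_le_mono real_sqrt_mult_self mult_le_cancel_left1 not_le order_trans s1 less_le_trans zero_less_one mult_right_mono real_sqrt_ge_zero linear one_le_power real_sqrt_pow2 power2_eq_square l0)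
    have ge: "u j * sqrt (lam j) - u j \<ge> 0" using mult_left_mono[OF s1 u0[of j]] by simp
    have "a j = u j * (sqrt (lam j) - 1)" unfolding a_def uS using ge
      by (simp add: right_diff_distrib)
    then have "(a j)^2 = p j * (sqrt (lam j) - 1)^2" by (simp add: power_mult_distrib u_def p0)
    also have "\<dots> \<le> p j * (lam j - 1)^2"
      using s1 s2 p0[of j] by (intro mult_left_mono power_mono) auto
    finally show ?thesis using True by simp
  next
    case False
    then have "sqrt (lam j) \<le> 1" using l0 by simp
    then have "u (Suc j) \<le> u j" unfolding uS using u0[of j] by (simp add: mult_left_le)
    then have "a j = 0" by (simp add: a_def)
    then show ?thesis using p0[of j] by simp
  qed
  have ub: "u q \<le> u 0 + (\<Sum>j<q. a j)" for q
  proof (induction q)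
    case 0 then show ?case by simp
  next
    case (Suc q)
    have "u (Suc q) \<le> u q + a q" by (simp add: a_def)
    then show ?case using Suc by simp
  qed
  have sq: "(\<Sum>j<q. a j)^2 \<le> real q * D" for q
  proof -
    have "(\<Sum>j<q. a j)^2 \<le> real q * (\<Sum>j<q. (a j)^2)" using cs_sum[of a "{..<q}"] by simp
    also have "\<dots> \<le> real q * D"
    proof (intro mult_left_mono)
      have "(\<Sum>j<q. (a j)^2) \<le> (\<Sum>j<q. p j * (max (lam j - 1) 0)^2)" by (intro sum_mono a2)
      then show "(\<Sum>j<q. (a j)^2) \<le> D" using D[of q] by linarith
    qed simp
    finally show ?thesis .
  qed
  have pq: "p q \<le> 2 * p 0 + 2 * real N * D" if "q < N" for q
  proof -
    have D0: "D \<ge> 0" using D[of 0] by simp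
    have "p q = (u q)^2" by (simp add: u_def p0)
    also have "\<dots> \<le> (u 0 + (\<Sum>j<q. a j))^2" using ub[of q] u0[of q] by (intro power_mono) auto
    also have "\<dots> \<le> 2 * (u 0)^2 + 2 * (\<Sum>j<q. a j)^2"
      by (simp add: power2_sum) (smt (verit) sum_squares_bound)
    also have "\<dots> \<le> 2 * p 0 + 2 * (real q * D)" using sq[of q] by (simp add: u_def p0)
    also have "\<dots> \<le> 2 * p 0 + 2 * real N * D" using that D0 by (simp add: mult_right_mono)
    finally show ?thesis .
  qed
  have "(\<Sum>q<N. p q) \<le> (\<Sum>q<N. 2 * p 0 + 2 * real N * D)" by (intro sum_mono pq) simp
  also have "\<dots> = 2 * real N * p 0 + 2 * real N ^ 2 * D" by (simp add: power2_eq_square algebra_simps)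
  finally show ?thesis .
qed

lemma down_bound:
  fixes p lam :: "nat \<Rightarrow> real" and D :: real and L :: nat
  assumes p0: "\<And>j. p j \<ge> 0" and l0: "\<And>j. lam j \<ge> 0"
    and det: "\<And>j. p (Suc j) = p j * lam j"
    and D: "\<And>n. (\<Sum>j<n. p j * (max (1 - lam j) 0)^2) \<le> D"
    and tot: "\<And>n. (\<Sum>q<n. p q) \<le> 1"
  shows "3 * (\<Sum>q<L. p q) \<le> 2 + 2 * real L ^ 2 * D"
proof -
  define u where "u j = sqrt (p j)" for j
  define b where "b j = max (u j - u (Suc j)) 0" for j
  have uS: "u (Suc j) = u j * sqrt (lam j)" for j unfolding u_def det by (rule real_sqrt_mult)
  have u0: "u j \<ge> 0" for j by (simp add: u_def p0)
  have b2: "(b j)^2 \<le> p j * (max (1 - lam j) 0)^2" for j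
  proof (cases "lam j \<le> 1")
    case True
    have s1: "sqrt (lam j) \<le> 1" using True by simp
    have s2: "lam j \<le> sqrt (lam j)"
    proof -
      have "lam j * lam j \<le> lam j * 1" using True l0[of j] by (intro mult_left_mono) auto
      then have "(lam j)^2 \<le> lam j" by (simp add: power2_eq_square)
      then show ?thesis using l0[of j] by (metis real_le_rsqrt)
    qed
    have ge: "u j - u j * sqrt (lam j) \<ge> 0" using mult_left_mono[OF s1 u0[of j]] by simp
    have "b j = u j * (1 - sqrt (lam j))" unfolding b_def uS using ge
      by (simp add: right_diff_distrib)
    then have "(b j)^2 = p j * (1 - sqrt (lam j))^2" by (simp add: power_mult_distrib u_def p0)
    also have "\<dots> \<le> p j * (1 - lam j)^2"
      using s1 s2 p0[of j] by (intro mult_left_mono power_mono) auto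
    finally show ?thesis using True by simp
  next
    case False
    then have "sqrt (lam j) \<ge> 1" by simp
    then have "u (Suc j) \<ge> u j" unfolding uS using mult_left_mono[OF \<open>sqrt (lam j) \<ge> 1\<close> u0[of j]] by simp
    then have "b j = 0" by (simp add: b_def)
    then show ?thesis using p0[of j] by simp
  qed
  have ub: "u q \<le> u (q + n) + (\<Sum>j\<in>{q..<q+n}. b j)" for q n
  proof (induction n)
    case 0 then show ?case by simp
  next
    case (Suc n)
    have "u (q + n) \<le> u (q + Suc n) + b (q + n)" by (simp add: b_def)
    then show ?case using Suc by simp
  qed
  have sq: "(\<Sum>j\<in>{q..<q+L}. b j)^2 \<le> real L * D" for q
  proof -
    have "(\<Sum>j\<in>{q..<q+L}. b j)^2 \<le> real L * (\<Sum>j\<in>{q..<q+L}. (b j)^2)" using cs_sum[of b "{q..<q+L}"] by simp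
    also have "\<dots> \<le> real L * D"
    proof (intro mult_left_mono)
      have "(\<Sum>j\<in>{q..<q+L}. (b j)^2) \<le> (\<Sum>j\<in>{q..<q+L}. p j * (max (1 - lam j) 0)^2)" by (intro sum_mono b2)
      also have "\<dots> \<le> (\<Sum>j<q+L. p j * (max (1 - lam j) 0)^2)"
        by (intro sum_mono2) (auto intro: mult_nonneg_nonneg p0)
      finally show "(\<Sum>j\<in>{q..<q+L}. (b j)^2) \<le> D" using D[of "q+L"] by linarith
    qed simp
    finally show ?thesis .
  qed
  have pq: "p q \<le> 2 * p (q + L) + 2 * real L * D" for q
  proof -
    have "p q = (u q)^2" by (simp add: u_def p0)
    also have "\<dots> \<le> (u (q + L) + (\<Sum>j\<in>{q..<q+L}. b j))^2" using ub[of q L] u0[of q] by (intro power_mono) auto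
    also have "\<dots> \<le> 2 * (u (q + L))^2 + 2 * (\<Sum>j\<in>{q..<q+L}. b j)^2"
      by (simp add: power2_sum) (smt (verit) sum_squares_bound)
    also have "\<dots> \<le> 2 * p (q + L) + 2 * (real L * D)" using sq[of q] by (simp add: u_def p0)
    finally show ?thesis by simp
  qed
  have "(\<Sum>q<L. p q) \<le> (\<Sum>q<L. 2 * p (q + L) + 2 * real L * D)" by (intro sum_mono pq)
  also have "\<dots> = 2 * (\<Sum>q<L. p (q + L)) + 2 * real L ^ 2 * D"
    by (simp add: sum.distrib sum_distrib_left power2_eq_square algebra_simps)
  finally have 1: "(\<Sum>q<L. p q) \<le> 2 * (\<Sum>q<L. p (q + L)) + 2 * real L ^ 2 * D" .
  have "(\<Sum>q<L. p (q + L)) = (\<Sum>q\<in>{L..<L+L}. p q)"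
    using sum.shift_bounds_nat_ivl[of p 0 L L] by (simp add: lessThan_atLeast0)
  moreover have "(\<Sum>q<L. p q) + (\<Sum>q\<in>{L..<L+L}. p q) = (\<Sum>q<L+L. p q)"
    using sum.atLeastLessThan_concat[of 0 L "L+L" p] by (simp add: lessThan_atLeast0)
  ultimately have "(\<Sum>q<L. p q) + (\<Sum>q<L. p (q + L)) \<le> 1" using tot[of "L+L"] by simp
  then show ?thesis using 1 by linarith
qed


lemma policy_regret_bounds:
  fixes F F' phi :: "real \<Rightarrow> real" and lmax c eps :: real
  assumes lm: "lmax > 1" and i2: "F' 1 > 0" and c: "c > 0"
    and Fle: "\<forall>x\<in>{0..lmax}. F x \<le> F 1 + F' 1 * (x - 1) - c * phi x"
    and phi0: "\<forall>x\<in>{0..lmax}. 0 \<le> phi x" and phiB: "\<forall>x\<in>{0..lmax}. phi x \<le> PB"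
    and Fnn: "\<forall>x\<in>{0..lmax}. F x \<ge> 0"
    and FS: "Fstar F lmax = F 1"
    and pol: "policy lmax lam" and st: "stable lam" and reg: "regret F lmax lam \<le> eps"
  shows "stat_dist lam 0 \<le> eps / F' 1"
    and "\<And>n. (\<Sum>j<n. stat_dist lam j * phi (lam j)) \<le> eps / c"
proof -
  define p where "p = stat_dist lam"
  have sta: "stationary lam p" unfolding p_def by (rule stat_dist_stationary[OF pol st])
  have p0: "p i \<ge> 0" for i using sta unfolding stationary_def by blast
  have ps: "p sums 1" using sta unfolding stationary_def by blast
  have det: "p (Suc j) = p j * lam j" for j by (rule stationary_detailed[OF sta])
  have lamI: "lam i \<in> {0..lmax}" for i using pol unfolding policy_def by auto
  define B where "B = F 1 + F' 1 * lmax"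
  have FB: "F (lam i) \<le> B" for i
  proof -
    have "F (lam i) \<le> F 1 + F' 1 * (lam i - 1) - c * phi (lam i)" using Fle lamI by blast
    also have "\<dots> \<le> F 1 + F' 1 * (lam i - 1)" using phi0 lamI c by (simp add: mult_nonneg_nonneg)
    also have "\<dots> \<le> B" unfolding B_def using i2 lamI[of i] by (intro add_left_mono mult_left_mono) auto
    finally show ?thesis .
  qed
  have sp: "summable p" using ps by (rule sums_summable)
  have s1: "summable (\<lambda>i. p i * F (lam i))"
  proof (rule summable_comparison_test'[where g="\<lambda>i. p i * B"])
    show "summable (\<lambda>i. p i * B)" using sp by (rule summable_mult2)
    fix n show "norm (p n * F (lam n)) \<le> p n * B"
      using p0[of n] FB[of n] Fnn lamI[of n] by (simp add: abs_mult mult_left_mono)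
  qed
  define Sphi where "Sphi = (\<Sum>i. p i * phi (lam i))"
  have s2: "summable (\<lambda>i. p i * phi (lam i))"
  proof (rule summable_comparison_test'[where g="\<lambda>i. p i * PB"])
    show "summable (\<lambda>i. p i * PB)" using sp by (rule summable_mult2)
    fix n show "norm (p n * phi (lam n)) \<le> p n * PB"
      using p0[of n] phiB phi0 lamI[of n] by (simp add: abs_mult mult_left_mono)
  qed
  have plam: "(\<lambda>i. p i * lam i) sums (1 - p 0)"
  proof -
    have "(\<lambda>i. p (Suc i)) sums (1 - p 0)" using ps sums_Suc_iff[of p "1 - p 0"] by simp
    then show ?thesis by (simp add: det)
  qed
  define g where "g i = p i * F 1 + F' 1 * (p i * lam i - p i) - c * (p i * phi (lam i))" for i
  have gs: "g sums (1 * F 1 + F' 1 * ((1 - p 0) - 1) - c * Sphi)"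
    unfolding g_def
    by (intro sums_diff sums_add sums_mult sums_mult2 ps plam summable_sums s2 [unfolded Sphi_def[symmetric]])
       (simp add: Sphi_def summable_sums[OF s2])
  have "exp_reward F lam = (\<Sum>i. p i * F (lam i))" unfolding exp_reward_def p_def ..
  also have "\<dots> \<le> suminf g"
  proof (rule suminf_le[OF _ s1 sums_summable[OF gs]])
    fix n
    have "F (lam n) \<le> F 1 + F' 1 * (lam n - 1) - c * phi (lam n)" using Fle lamI by blast
    then have "p n * F (lam n) \<le> p n * (F 1 + F' 1 * (lam n - 1) - c * phi (lam n))"
      using p0[of n] by (intro mult_left_mono)
    then show "p n * F (lam n) \<le> g n" unfolding g_def by (simp add: algebra_simps)
  qed
  also have "suminf g = F 1 - F' 1 * p 0 - c * Sphi" using sums_unique[OF gs] by simp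
  finally have er: "exp_reward F lam \<le> F 1 - F' 1 * p 0 - c * Sphi" .
  have "F' 1 * p 0 + c * Sphi \<le> eps" using reg er FS unfolding regret_def by simp
  moreover have Sphi0: "Sphi \<ge> 0" unfolding Sphi_def using p0 phi0 lamI by (intro suminf_nonneg s2 mult_nonneg_nonneg) auto
  moreover have "p 0 \<ge> 0" by (rule p0)
  ultimately have "F' 1 * p 0 \<ge> 0 \<and> c * Sphi \<ge> 0 \<and> F' 1 * p 0 + c * Sphi \<le> eps" using c i2 by simp
  then have A: "F' 1 * p 0 \<le> eps" and B: "c * Sphi \<le> eps" by linarith+
  show "stat_dist lam 0 \<le> eps / F' 1" using A i2 unfolding p_def[symmetric] by (simp add: field_simps)
  fix n
  have "(\<Sum>j<n. p j * phi (lam j)) \<le> Sphi" unfolding Sphi_def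
    by (rule sum_le_suminf[OF s2]) (use p0 phi0 lamI in \<open>auto intro: mult_nonneg_nonneg\<close>)
  also have "\<dots> \<le> eps / c" using B c by (simp add: field_simps)
  finally show "(\<Sum>j<n. stat_dist lam j * phi (lam j)) \<le> eps / c" unfolding p_def .
qed


lemma queue_lb:
  fixes p :: "nat \<Rightarrow> real" and N :: nat
  assumes p0: "\<And>i. p i \<ge> 0" and ps: "p sums 1" and t: "(\<Sum>q<N. p q) \<le> 5/6"
  shows "ennreal (real N / 6) \<le> (\<Sum>i. ennreal (real i * p i))"
proof -
  define g where "g i = (if N \<le> i then real N * p i else 0)" for i
  have sp: "summable p" using ps by (rule sums_summable)
  have g0: "g i \<ge> 0" for i using p0 by (simp add: g_def)
  have sg: "summable g"
    by (rule summable_comparison_test'[where g="\<lambda>i. real N * p i"]) (use sp p0 in \<open>auto simp: g_def intro: summable_mult\<close>)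
  have "suminf g = (\<Sum>n. g (n + N)) + sum g {..<N}" by (rule suminf_split_initial_segment[OF sg])
  also have "sum g {..<N} = 0" by (simp add: g_def)
  also have "(\<Sum>n. g (n + N)) = (\<Sum>n. real N * p (n + N))" by (simp add: g_def)
  also have "\<dots> = real N * (\<Sum>n. p (n + N))"
    using summable_ignore_initial_segment[OF sp, of N] by (simp add: suminf_mult)
  also have "(\<Sum>n. p (n + N)) = 1 - (\<Sum>q<N. p q)"
    using suminf_split_initial_segment[OF sp, of N] sums_unique[OF ps] by simp
  finally have "suminf g = real N * (1 - (\<Sum>q<N. p q))" by simp
  moreover have "real N * (1 - (\<Sum>q<N. p q)) \<ge> real N * (1/6)" using t by (intro mult_left_mono) auto
  ultimately have ge: "suminf g \<ge> real N / 6" by simp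
  have "ennreal (real N / 6) \<le> ennreal (suminf g)" using ge by (rule ennreal_leI)
  also have "\<dots> = (\<Sum>i. ennreal (g i))" by (rule suminf_ennreal2[OF g0 sg, symmetric])
  also have "\<dots> \<le> (\<Sum>i. ennreal (real i * p i))"
  proof (rule suminf_le)
    fix i show "ennreal (g i) \<le> ennreal (real i * p i)"
      using p0[of i] by (auto simp: g_def intro!: ennreal_leI mult_right_mono)
  qed auto
  finally show ?thesis .
qed


definition tu :: "nat \<Rightarrow> nat \<Rightarrow> nat \<Rightarrow> real" where
  "tu m K q = real m + real (min q (2 * K - q))"

definition tent :: "nat \<Rightarrow> nat \<Rightarrow> nat \<Rightarrow> real" where
  "tent m K q = (if q < 2 * K then (tu m K (Suc q) / tu m K q)^2 else 0)"

lemma tu_ge: "tu m K q \<ge> real m"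
  by (simp add: tu_def)

lemma tu_step: "q < 2 * K \<Longrightarrow> tu m K (Suc q) = tu m K q + 1 \<or> tu m K (Suc q) = tu m K q - 1"
  unfolding tu_def by (cases "q < K") (auto simp: min_def)

lemma tu_le_step: "q < 2 * K \<Longrightarrow> tu m K (Suc q) \<le> tu m K q + 1"
  using tu_step[of q K m] by auto

lemma tent_policy:
  assumes m: "m \<ge> 1" and lm: "(1 + 1 / real m)^2 \<le> lmax"
  shows "policy lmax (tent m K)"
  unfolding policy_def
proof
  fix q
  have u0: "tu m K q \<ge> 1" using tu_ge[of m K q] m by simp
  show "0 \<le> tent m K q \<and> tent m K q \<le> lmax"
  proof (cases "q < 2 * K")
    case True
    have "tu m K (Suc q) \<ge> 0" using tu_ge[of m K "Suc q"] by simp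
    have "tu m K (Suc q) / tu m K q \<le> (tu m K q + 1) / tu m K q"
      using tu_le_step[OF True, of m] u0 by (intro divide_right_mono) auto
    also have "\<dots> = 1 + 1 / tu m K q" using u0 by (simp add: field_simps)
    also have "\<dots> \<le> 1 + 1 / real m" using u0 tu_ge[of m K q] m by (simp add: frac_le)
    finally have "(tu m K (Suc q) / tu m K q)^2 \<le> (1 + 1 / real m)^2"
      using \<open>tu m K (Suc q) \<ge> 0\<close> u0 by (intro power_mono) auto
    then show ?thesis using True lm by (simp add: tent_def)
  next
    case False
    then show ?thesis using lm by (simp add: tent_def) (smt (verit) zero_le_power2)
  qed
qed

lemma tent_reach: "reach (tent m K) \<subseteq> {..2 * K}"
proof
  fix i assume i: "i \<in> reach (tent m K)"
  show "i \<in> {..2 * K}"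
  proof (rule ccontr)
    assume "i \<notin> {..2 * K}"
    then have "2 * K < i" by simp
    then have "tent m K (2 * K) > 0" using i unfolding reach_def by blast
    then show False by (simp add: tent_def)
  qed
qed

lemma tent_stable: "stable (tent m K)"
  unfolding stable_def
  by (rule summable_on_finite) (rule finite_subset[OF tent_reach], simp)

lemma tent_prod: "q \<le> 2 * K \<Longrightarrow> m \<ge> 1 \<Longrightarrow> (\<Prod>j<q. tent m K j) = (tu m K q / tu m K 0)^2"
proof (induction q)
  case 0 then have "tu m K 0 \<noteq> 0" using tu_ge[of m K 0] by auto
  then show ?case by simp
next
  case (Suc q)
  then have q: "q < 2 * K" by simp
  have nz: "tu m K q \<noteq> 0" using tu_ge[of m K q] Suc by auto
  have "(\<Prod>j<Suc q. tent m K j) = (tu m K q / tu m K 0)^2 * (tu m K (Suc q) / tu m K q)^2"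
    using Suc q by (simp add: tent_def)
  also have "\<dots> = (tu m K (Suc q) / tu m K 0)^2" using nz by (simp add: power_divide field_simps)
  finally show ?case .
qed

lemma tent_dist:
  fixes m K :: nat
  assumes m: "m \<ge> 1" and lm: "(1 + 1 / real m)^2 \<le> lmax"
  defines "Z \<equiv> (\<Sum>q\<le>2 * K. (tu m K q)^2)"
  shows "\<And>q. q \<le> 2 * K \<Longrightarrow> stat_dist (tent m K) q = (tu m K q)^2 / Z"
    and "\<And>q. q > 2 * K \<Longrightarrow> stat_dist (tent m K) q = 0"
    and "Z > 0"
proof -
  define p where "p = stat_dist (tent m K)"
  have sta: "stationary (tent m K) p" unfolding p_def by (rule stat_dist_stationary[OF tent_policy[OF m lm] tent_stable])
  have pz: "p q = 0" if "q > 2 * K" for q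
  proof -
    have "q \<notin> reach (tent m K)" using tent_reach[of m K] that by auto
    then show ?thesis using sta unfolding stationary_def by blast
  qed
  have u00: "tu m K 0 > 0" using tu_ge[of m K 0] m by simp
  define a where "a = p 0 / (tu m K 0)^2"
  have pq: "p q = a * (tu m K q)^2" if "q \<le> 2 * K" for q
    using stationary_prod[OF sta, of q] tent_prod[OF that m] u00 by (simp add: a_def power_divide)
  have "p sums 1" using sta unfolding stationary_def by blast
  then have "1 = suminf p" by (simp add: sums_unique)
  also have "suminf p = (\<Sum>q\<le>2 * K. p q)" by (rule suminf_finite) (auto intro: pz)
  also have "\<dots> = a * Z" unfolding Z_def by (simp add: pq sum_distrib_left)
  finally have aZ: "a * Z = 1" by simp
  have Zp: "Z > 0"
  proof -
    have "(tu m K 0)^2 \<le> Z" unfolding Z_def by (rule member_le_sum) auto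
    then show ?thesis using u00 by (smt (verit) zero_less_power)
  qed
  have a: "a = 1 / Z" using aZ Zp by (simp add: field_simps)
  show "stat_dist (tent m K) q = (tu m K q)^2 / Z" if "q \<le> 2 * K" for q
    using pq[OF that] a unfolding p_def by simp
  show "stat_dist (tent m K) q = 0" if "q > 2 * K" for q using pz[OF that] unfolding p_def .
  show "Z > 0" by (rule Zp)
qed

lemma sumsq_ge: "(\<Sum>q\<le>n. (real q)^2) \<ge> real n ^ 3 / 3"
proof (induction n)
  case 0 then show ?case by simp
next
  case (Suc n)
  have "real (Suc n) ^ 3 / 3 = real n ^ 3 / 3 + (3 * real n ^ 2 + 3 * real n + 1) / 3"
    by (simp add: power2_eq_square power3_eq_cube algebra_simps add_divide_distrib)
  also have "\<dots> \<le> (\<Sum>q\<le>n. (real q)^2) + (real (Suc n))^2"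
  proof -
    have "(3 * real n ^ 2 + 3 * real n + 1) / 3 \<le> (real (Suc n))^2" by (simp add: power2_eq_square field_simps)
    then show ?thesis using Suc by linarith
  qed
  finally show ?case by simp
qed

lemma tu_0: "tu m K 0 = real m" by (simp add: tu_def)
lemma tu_2K: "tu m K (2 * K) = real m" by (simp add: tu_def)

lemma tent_Z_ge:
  fixes m K :: nat
  shows "(\<Sum>q\<le>2 * K. (tu m K q)^2) \<ge> real K ^ 3 / 3"
proof -
  have "real K ^ 3 / 3 \<le> (\<Sum>q\<le>K. (real q)^2)" by (rule sumsq_ge)
  also have "\<dots> \<le> (\<Sum>q\<le>K. (tu m K q)^2)"
  proof (rule sum_mono)
    fix q assume "q \<in> {..K}"
    then have "tu m K q = real m + real q" by (simp add: tu_def)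
    then show "(real q)^2 \<le> (tu m K q)^2" by (simp add: power_mono)
  qed
  also have "\<dots> \<le> (\<Sum>q\<le>2 * K. (tu m K q)^2)" by (rule sum_mono2) auto
  finally show ?thesis .
qed

lemma tent_term:
  fixes m K :: nat
  assumes m: "m \<ge> 1" and q: "q < 2 * K"
  shows "(tu m K q)^2 * (tent m K q - 1)^2 \<le> 9"
proof -
  define u where "u = tu m K q"
  define v where "v = tu m K (Suc q)"
  have u1: "u \<ge> 1" using tu_ge[of m K q] m by (simp add: u_def)
  have v1: "v \<ge> 0" using tu_ge[of m K "Suc q"] by (simp add: v_def)
  have vu: "v = u + 1 \<or> v = u - 1" using tu_step[OF q, of m] by (simp add: u_def v_def)
  have "u^2 * ((v / u)^2 - 1)^2 = (v^2 - u^2)^2 / u^2" using u1 by (simp add: power_divide field_simps)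
  also have "(v^2 - u^2)^2 \<le> 9 * u^2"
  proof -
    have "\<bar>v^2 - u^2\<bar> \<le> 3 * u" using vu u1 by (auto simp: power2_eq_square algebra_simps)
    then have "\<bar>v^2 - u^2\<bar>^2 \<le> (3 * u)^2" by (intro power_mono) auto
    then show ?thesis by (simp add: power_mult_distrib)
  qed
  then have "(v^2 - u^2)^2 / u^2 \<le> 9 * u^2 / u^2" using u1 by (intro divide_right_mono) auto
  also have "\<dots> = 9" using u1 by simp
  finally show ?thesis using q by (simp add: tent_def u_def v_def)
qed

lemma tent_S2:
  fixes m K :: nat
  assumes m: "m \<ge> 1"
  shows "(\<Sum>q\<le>2 * K. (tu m K q)^2 * (tent m K q - 1)^2) \<le> 18 * real K + real m ^ 2"
proof -
  have "(\<Sum>q\<le>2 * K. (tu m K q)^2 * (tent m K q - 1)^2)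
      = (\<Sum>q<2 * K. (tu m K q)^2 * (tent m K q - 1)^2) + (tu m K (2 * K))^2 * (tent m K (2 * K) - 1)^2"
    by (simp add: lessThan_Suc_atMost[symmetric])
  also have "(\<Sum>q<2 * K. (tu m K q)^2 * (tent m K q - 1)^2) \<le> (\<Sum>q<2 * K. 9)"
    by (rule sum_mono) (rule tent_term[OF m], simp)
  also have "(tu m K (2 * K))^2 * (tent m K (2 * K) - 1)^2 = real m ^ 2" by (simp add: tu_2K tent_def)
  finally show ?thesis by simp
qed

lemma tent_S1:
  fixes m K :: nat
  assumes m: "m \<ge> 1"
  shows "(\<Sum>q\<le>2 * K. (tu m K q)^2 * tent m K q) = (\<Sum>q\<le>2 * K. (tu m K q)^2) - real m ^ 2"
proof -
  have nz: "tu m K q \<noteq> 0" for q using tu_ge[of m K q] m by auto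
  have "(\<Sum>q\<le>2 * K. (tu m K q)^2 * tent m K q) = (\<Sum>q<2 * K. (tu m K q)^2 * tent m K q)"
    by (simp add: lessThan_Suc_atMost[symmetric] tent_def)
  also have "\<dots> = (\<Sum>q<2 * K. (tu m K (Suc q))^2)"
    by (rule sum.cong) (auto simp: tent_def power_divide nz)
  also have "\<dots> = (\<Sum>q<Suc (2 * K). (tu m K q)^2) - (tu m K 0)^2"
    by (subst sum.lessThan_Suc_shift) simp
  also have "\<dots> = (\<Sum>q\<le>2 * K. (tu m K q)^2) - real m ^ 2" by (simp add: lessThan_Suc_atMost tu_0)
  finally show ?thesis .
qed

lemma tent_regret:
  fixes F F' :: "real \<Rightarrow> real" and m K :: nat and K' lmax :: real
  assumes m: "m \<ge> 1" and lm: "(1 + 1 / real m)^2 \<le> lmax" and K: "K \<ge> 1" and K': "K' \<ge> 0"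
    and lowq: "\<forall>x\<in>{0..lmax}. F 1 + F' 1 * (x - 1) - K' * (x - 1)^2 \<le> F x"
    and FS: "Fstar F lmax = F 1" and i2: "F' 1 > 0"
  shows "regret F lmax (tent m K) \<le> 3 * (F' 1 * real m ^ 2 + K' * (18 + real m ^ 2)) / real K ^ 2"
proof -
  define Z where "Z = (\<Sum>q\<le>2 * K. (tu m K q)^2)"
  define p where "p = stat_dist (tent m K)"
  define t where "t = tent m K"
  have pq: "p q = (tu m K q)^2 / Z" if "q \<le> 2 * K" for q
    using tent_dist(1)[OF m lm that] unfolding p_def Z_def .
  have pz: "p q = 0" if "q > 2 * K" for q using tent_dist(2)[OF m lm that] unfolding p_def .
  have Z0: "Z > 0" using tent_dist(3)[OF m lm] unfolding Z_def .
  have tI: "t q \<in> {0..lmax}" for q using tent_policy[OF m lm, of K] unfolding policy_def t_def by auto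
  define S1 where "S1 = (\<Sum>q\<le>2 * K. (tu m K q)^2 * t q)"
  define S2 where "S2 = (\<Sum>q\<le>2 * K. (tu m K q)^2 * (t q - 1)^2)"
  have S1v: "S1 = Z - real m ^ 2" unfolding S1_def Z_def t_def by (rule tent_S1[OF m])
  have S2v: "S2 \<le> 18 * real K + real m ^ 2" unfolding S2_def t_def by (rule tent_S2[OF m])
  have "exp_reward F (tent m K) = (\<Sum>q\<le>2 * K. p q * F (t q))"
    unfolding exp_reward_def unfolding p_def[symmetric] unfolding t_def[symmetric]
    by (rule suminf_finite) (auto simp: pz)
  also have "\<dots> \<ge> (\<Sum>q\<le>2 * K. (1 / Z) * (F 1 * (tu m K q)^2 + F' 1 * ((tu m K q)^2 * t q) - F' 1 * (tu m K q)^2 - K' * ((tu m K q)^2 * (t q - 1)^2)))"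
  proof (rule sum_mono)
    fix q assume q: "q \<in> {..2 * K}"
    have "F 1 + F' 1 * (t q - 1) - K' * (t q - 1)^2 \<le> F (t q)" using lowq tI by blast
    then have "p q * (F 1 + F' 1 * (t q - 1) - K' * (t q - 1)^2) \<le> p q * F (t q)"
      using pq[of q] q Z0 by (intro mult_left_mono) auto
    then show "(1 / Z) * (F 1 * (tu m K q)^2 + F' 1 * ((tu m K q)^2 * t q) - F' 1 * (tu m K q)^2 - K' * ((tu m K q)^2 * (t q - 1)^2)) \<le> p q * F (t q)"
      using pq[of q] q by (simp add: algebra_simps)
  qed
  also have "(\<Sum>q\<le>2 * K. (1 / Z) * (F 1 * (tu m K q)^2 + F' 1 * ((tu m K q)^2 * t q) - F' 1 * (tu m K q)^2 - K' * ((tu m K q)^2 * (t q - 1)^2)))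
     = (1 / Z) * (\<Sum>q\<le>2 * K. (F 1 * (tu m K q)^2 + F' 1 * ((tu m K q)^2 * t q) - F' 1 * (tu m K q)^2 - K' * ((tu m K q)^2 * (t q - 1)^2)))"
    by (rule sum_distrib_left[symmetric])
  also have "(\<Sum>q\<le>2 * K. (F 1 * (tu m K q)^2 + F' 1 * ((tu m K q)^2 * t q) - F' 1 * (tu m K q)^2 - K' * ((tu m K q)^2 * (t q - 1)^2)))
     = F 1 * Z + F' 1 * S1 - F' 1 * Z - K' * S2"
    unfolding S1_def S2_def Z_def by (simp add: sum_subtractf sum.distrib sum_distrib_left)
  finally have "exp_reward F (tent m K) \<ge> (1 / Z) * (F 1 * Z + F' 1 * S1 - F' 1 * Z - K' * S2)" .
  also have "(1 / Z) * (F 1 * Z + F' 1 * S1 - F' 1 * Z - K' * S2) = F 1 - (F' 1 * real m ^ 2 + K' * S2) / Z"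
    using Z0 unfolding S1v by (simp add: field_simps)
  finally have "regret F lmax (tent m K) \<le> (F' 1 * real m ^ 2 + K' * S2) / Z"
    unfolding regret_def FS by simp
  also have "\<dots> \<le> (F' 1 * real m ^ 2 + K' * (18 * real K + real m ^ 2)) / Z"
    using S2v K' Z0 by (intro divide_right_mono add_left_mono mult_left_mono) auto
  also have "\<dots> \<le> (real K * (F' 1 * real m ^ 2 + K' * (18 + real m ^ 2))) / Z"
  proof (intro divide_right_mono)
    have "0 \<le> F' 1 * real m ^ 2" using i2 by simp
    then have "1 * (F' 1 * real m ^ 2) \<le> real K * (F' 1 * real m ^ 2)" using K by (intro mult_right_mono) auto
    then have "F' 1 * real m ^ 2 \<le> real K * (F' 1 * real m ^ 2)" by simp
    moreover have "K' * (18 * real K + real m ^ 2) \<le> real K * (K' * (18 + real m ^ 2))"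
    proof -
      have "18 * real K + real m ^ 2 \<le> real K * (18 + real m ^ 2)" using K by (simp add: algebra_simps mult_le_cancel_right1)
      then show ?thesis using K' by (simp add: mult_left_mono mult.left_commute)
    qed
    ultimately show "F' 1 * real m ^ 2 + K' * (18 * real K + real m ^ 2) \<le> real K * (F' 1 * real m ^ 2 + K' * (18 + real m ^ 2))"
      by (simp add: algebra_simps)
  qed (use Z0 in simp)
  also have "\<dots> \<le> (real K * (F' 1 * real m ^ 2 + K' * (18 + real m ^ 2))) / (real K ^ 3 / 3)"
  proof (rule divide_left_mono)
    show "real K ^ 3 / 3 \<le> Z" unfolding Z_def by (rule tent_Z_ge)
    show "0 \<le> real K * (F' 1 * real m ^ 2 + K' * (18 + real m ^ 2))" using i2 K' by simp
    show "0 < Z * (real K ^ 3 / 3)" using Z0 K by simp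
  qed
  also have "\<dots> = 3 * (F' 1 * real m ^ 2 + K' * (18 + real m ^ 2)) / real K ^ 2"
    using K by (simp add: field_simps power2_eq_square power3_eq_cube)
  finally show ?thesis .
qed

lemma tent_queue:
  fixes m K :: nat
  assumes m: "m \<ge> 1" and lm: "(1 + 1 / real m)^2 \<le> lmax"
  shows "exp_queue (tent m K) \<le> ennreal (2 * real K)"
proof -
  define p where "p = stat_dist (tent m K)"
  have sta: "stationary (tent m K) p" unfolding p_def by (rule stat_dist_stationary[OF tent_policy[OF m lm] tent_stable])
  have p0: "p i \<ge> 0" for i using sta unfolding stationary_def by blast
  have ps: "p sums 1" using sta unfolding stationary_def by blast
  have pz: "p q = 0" if "q > 2 * K" for q using tent_dist(2)[OF m lm that] unfolding p_def .
  have "exp_queue (tent m K) = (\<Sum>i. ennreal (real i * p i))" unfolding exp_queue_def p_def ..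
  also have "\<dots> \<le> (\<Sum>i. ennreal (2 * real K * p i))"
  proof (rule suminf_le)
    fix i show "ennreal (real i * p i) \<le> ennreal (2 * real K * p i)"
    proof (cases "i \<le> 2 * K")
      case True then show ?thesis using p0[of i] by (intro ennreal_leI mult_right_mono) auto
    next
      case False then show ?thesis using pz[of i] by simp
    qed
  qed auto
  also have "\<dots> = ennreal (\<Sum>i. 2 * real K * p i)"
    by (rule suminf_ennreal2) (use p0 sums_summable[OF ps] in \<open>auto intro: summable_mult\<close>)
  also have "(\<Sum>i. 2 * real K * p i) = 2 * real K"
    using sums_unique[OF sums_mult[OF ps, of "2 * real K"]] by simp
  finally show ?thesis .
qed



lemma lb_policy:
  fixes F F' :: "real \<Rightarrow> real" and lmax c alpha eps :: real
  assumes lm: "lmax > 1" and i2: "F' 1 > 0" and c: "c > 0"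
    and FS: "Fstar F lmax = F 1" and Fnn: "\<forall>x\<in>{0..lmax}. F x \<ge> 0"
    and supp: "\<forall>x\<in>{0..lmax}. F x \<le> F 1 + F' 1 * (x - 1)"
    and side: "(\<forall>x\<in>{0..1}. F x \<le> F 1 + F' 1 * (x - 1) - c * (x - 1)^2) \<or>
               (\<forall>x\<in>{1..lmax}. F x \<le> F 1 + F' 1 * (x - 1) - c * (x - 1)^2)"
    and al: "alpha > 0" "2 * alpha * (1 / F' 1) \<le> 1/4" "2 * alpha^2 * (1 / c) \<le> 1/4"
    and eps: "0 < eps" "eps \<le> 1" "eps \<le> alpha^2 / 4"
    and pol: "policy lmax lam" and st: "stable lam" and reg: "regret F lmax lam \<le> eps"
  shows "ennreal (alpha / 12 / sqrt eps) \<le> exp_queue lam"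
proof -
  define p where "p = stat_dist lam"
  have sta: "stationary lam p" unfolding p_def by (rule stat_dist_stationary[OF pol st])
  have p0: "p i \<ge> 0" for i using sta unfolding stationary_def by blast
  have ps: "p sums 1" using sta unfolding stationary_def by blast
  have det: "p (Suc j) = p j * lam j" for j by (rule stationary_detailed[OF sta])
  have l0: "lam j \<ge> 0" for j using pol unfolding policy_def by auto
  have tot: "(\<Sum>q<n. p q) \<le> 1" for n
    using sum_le_suminf[OF sums_summable[OF ps], of "{..<n}"] p0 sums_unique[OF ps] by simp
  define N where "N = nat \<lfloor>alpha / sqrt eps\<rfloor>"
  have se: "sqrt eps > 0" "sqrt eps \<le> 1" using eps by auto
  have aN0: "alpha / sqrt eps \<ge> 0" using al se by simp
  have N1: "real N \<le> alpha / sqrt eps" unfolding N_def using aN0 by linarith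
  have N2: "real N \<ge> alpha / sqrt eps - 1" unfolding N_def using aN0 by linarith
  have N0: "real N \<ge> 0" by simp
  have NsqD: "real N ^ 2 * (eps / c) \<le> alpha ^ 2 * (1 / c)"
  proof -
    have "real N ^ 2 \<le> (alpha / sqrt eps)^2" using N1 N0 by (intro power_mono) auto
    also have "\<dots> = alpha^2 / eps" using eps by (simp add: power_divide)
    finally have "real N ^ 2 * (eps / c) \<le> alpha^2 / eps * (eps / c)" using eps c by (intro mult_right_mono) auto
    also have "\<dots> = alpha ^ 2 * (1 / c)" using eps by simp
    finally show ?thesis .
  qed
  have main: "(\<Sum>q<N. p q) \<le> 5/6"
  proof (cases "\<forall>x\<in>{1..lmax}. F x \<le> F 1 + F' 1 * (x - 1) - c * (x - 1)^2")
    case True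
    define phi where "phi x = (max (x - 1) 0)^2" for x :: real
    have Fle: "\<forall>x\<in>{0..lmax}. F x \<le> F 1 + F' 1 * (x - 1) - c * phi x"
    proof
      fix x :: real assume x: "x \<in> {0..lmax}"
      show "F x \<le> F 1 + F' 1 * (x - 1) - c * phi x"
      proof (cases "x \<ge> 1")
        case True then show ?thesis using \<open>\<forall>x\<in>{1..lmax}. _\<close> x by (simp add: phi_def)
      next
        case False then show ?thesis using supp x by (simp add: phi_def)
      qed
    qed
    have phiB: "\<forall>x\<in>{0..lmax}. phi x \<le> lmax^2"
    proof
      fix x :: real assume x: "x \<in> {0..lmax}"
      have "max (x - 1) 0 \<le> lmax" using x by auto
      then show "phi x \<le> lmax^2" unfolding phi_def by (intro power_mono) auto
    qed
    have phi0: "\<forall>x\<in>{0..lmax}. 0 \<le> phi x" by (simp add: phi_def)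
    have B1: "p 0 \<le> eps / F' 1" and B2: "\<And>n. (\<Sum>j<n. p j * phi (lam j)) \<le> eps / c"
      using policy_regret_bounds[where phi=phi and F=F and F'=F', OF lm i2 c Fle phi0 phiB Fnn FS pol st reg]
      unfolding p_def by auto
    have "(\<Sum>q<N. p q) \<le> 2 * real N * p 0 + 2 * real N ^ 2 * (eps / c)"
      by (rule up_bound[where p=p and lam=lam, OF p0 l0 det]) (use B2 in \<open>simp add: phi_def\<close>)
    also have "2 * real N * p 0 \<le> 1/4"
    proof -
      have "2 * real N * p 0 \<le> 2 * (alpha / sqrt eps) * (eps / F' 1)"
        using N1 B1 p0[of 0] by (intro mult_mono) auto
      also have "\<dots> = 2 * alpha * (1 / F' 1) * sqrt eps"
      proof -
        have ee: "eps = sqrt eps * sqrt eps" using eps by simp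
        show ?thesis using se i2 by (subst (2) ee) (simp add: field_simps)
      qed
      also have "\<dots> \<le> 2 * alpha * (1 / F' 1) * 1" using se al i2 by (intro mult_left_mono) auto
      finally show ?thesis using al by simp
    qed
    also have "2 * real N ^ 2 * (eps / c) \<le> 1/4" using NsqD al by simp
    finally show ?thesis by simp
  next
    case False
    then have L: "\<forall>x\<in>{0..1}. F x \<le> F 1 + F' 1 * (x - 1) - c * (x - 1)^2" using side by blast
    define phi where "phi x = (max (1 - x) 0)^2" for x :: real
    have Fle: "\<forall>x\<in>{0..lmax}. F x \<le> F 1 + F' 1 * (x - 1) - c * phi x"
    proof
      fix x :: real assume x: "x \<in> {0..lmax}"
      show "F x \<le> F 1 + F' 1 * (x - 1) - c * phi x"
      proof (cases "x \<le> 1")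
        case True
        have "phi x = (x - 1)^2" using True by (simp add: phi_def power2_commute)
        then show ?thesis using L x True by simp
      next
        case False then show ?thesis using supp x by (simp add: phi_def)
      qed
    qed
    have phiB: "\<forall>x\<in>{0..lmax}. phi x \<le> 1"
    proof
      fix x :: real assume x: "x \<in> {0..lmax}"
      have "max (1 - x) 0 \<le> 1" using x by auto
      then show "phi x \<le> 1" unfolding phi_def by (simp add: power_le_one)
    qed
    have phi0: "\<forall>x\<in>{0..lmax}. 0 \<le> phi x" by (simp add: phi_def)
    have B2: "\<And>n. (\<Sum>j<n. p j * phi (lam j)) \<le> eps / c"
      using policy_regret_bounds(2)[where phi=phi and F=F and F'=F', OF lm i2 c Fle phi0 phiB Fnn FS pol st reg]
      unfolding p_def by auto
    have "3 * (\<Sum>q<N. p q) \<le> 2 + 2 * real N ^ 2 * (eps / c)"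
      by (rule down_bound[where p=p and lam=lam, OF p0 l0 det _ tot]) (use B2 in \<open>simp add: phi_def\<close>)
    also have "2 * real N ^ 2 * (eps / c) \<le> 1/2" using NsqD al by simp
    finally show ?thesis by simp
  qed
  have "ennreal (real N / 6) \<le> exp_queue lam"
    unfolding exp_queue_def p_def[symmetric] by (rule queue_lb[where p=p, OF p0 ps main])
  moreover have "alpha / 12 / sqrt eps \<le> real N / 6"
  proof -
    have "sqrt eps \<le> alpha / 2"
    proof -
      have "sqrt eps \<le> sqrt (alpha^2 / 4)" using eps by (intro real_sqrt_le_mono) auto
      also have "\<dots> = alpha / 2" using al by (simp add: real_sqrt_divide)
      finally show ?thesis .
    qed
    then have "1 \<le> alpha / (2 * sqrt eps)" using se by (simp add: field_simps)
    then have "alpha / (2 * sqrt eps) \<le> alpha / sqrt eps - 1" using se by (simp add: field_simps)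
    then have "alpha / (2 * sqrt eps) \<le> real N" using N2 by linarith
    then show ?thesis by (simp add: field_simps)
  qed
  ultimately show ?thesis by (meson ennreal_leI order_trans)
qed





lemma exists_m:
  fixes lmax :: real assumes "lmax > 1"
  shows "\<exists>m::nat. m \<ge> 1 \<and> (1 + 1 / real m)^2 \<le> lmax"
proof -
  define s where "s = sqrt lmax"
  have s1: "s > 1" using assms by (simp add: s_def)
  define m where "m = nat \<lceil>1 / (s - 1)\<rceil>"
  have pos: "1 / (s - 1) > 0" using s1 by simp
  have mge: "real m \<ge> 1 / (s - 1)" unfolding m_def by linarith
  then have m1: "m \<ge> 1" using pos unfolding m_def by linarith
  have "1 / real m \<le> s - 1"
  proof -
    have mpos: "real m > 0" using mge pos by linarith
    have "1 / real m \<le> 1 / (1 / (s - 1))" using mge pos mpos s1 by (intro divide_left_mono) auto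
    then show ?thesis using s1 by simp
  qed
  then have "1 + 1 / real m \<le> s" by simp
  then have "(1 + 1 / real m)^2 \<le> s^2" by (intro power_mono) auto
  also have "s^2 = lmax" using assms by (simp add: s_def)
  finally show ?thesis using m1 by blast
qed

theorem theorem5p3:
  fixes F F' F'' F3 F4 :: "real \<Rightarrow> real" and lmax :: real
  assumes lmax: "lmax > 1"
    and F_nonneg: "\<forall>x\<in>{0..lmax}. F x \<ge> 0"
    and F0: "F 0 = 0"
    and F_deriv: "\<forall>x\<in>{0..lmax}. (F has_real_derivative F' x) (at x within {0..lmax})"
    and F'_cont: "continuous_on {0..lmax} F'"
    and i1: "\<forall>x\<in>{0..<1}. F x < Fstar F lmax"
    and i2: "F' 1 > 0"
    and F'_deriv: "\<forall>x\<in>{0<..<lmax}. (F' has_real_derivative F'' x) (at x)"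
    and F''_cont: "continuous_on {0<..<lmax} F''"
    and F''1: "F'' 1 < 0"
    and F''_deriv: "\<forall>x\<in>{0<..<lmax}. (F'' has_real_derivative F3 x) (at x)"
    and F3_deriv: "\<forall>x\<in>{0<..<lmax}. (F3 has_real_derivative F4 x) (at x)"
    and F3_bdd: "\<exists>B. \<forall>x\<in>{0<..<lmax}. \<bar>F3 x\<bar> \<le> B"
    and F4_bdd: "\<exists>B. \<forall>x\<in>{0<..<lmax}. \<bar>F4 x\<bar> \<le> B"
    and cl: "concave_like F lmax"
  shows "\<exists>C1 C2 eps0. C1 > 0 \<and> C2 > 0 \<and> eps0 > 0 \<and>
           (\<forall>eps\<in>{0<..eps0}. ennreal (C1 / sqrt eps) \<le> qstar F lmax eps \<and>
                              qstar F lmax eps \<le> ennreal (C2 / sqrt eps))"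
proof -
  have Fc: "continuous_on {0..lmax} F"
    by (rule DERIV_continuous_on) (use F_deriv in blast)
  obtain r where r: "r > 0" "r < 1" "1 + r < lmax" and near: "\<forall>x. \<bar>x - 1\<bar> \<le> r \<longrightarrow>
     F 1 + F' 1 * (x - 1) - (3 * (- F'' 1) / 4) * (x - 1)^2 \<le> F x \<and>
     F x \<le> F 1 + F' 1 * (x - 1) - ((- F'' 1) / 4) * (x - 1)^2"
    using near_one[where F=F and F'=F' and F''=F'', OF lmax F_deriv F'_deriv F''_cont F''1] by blast
  define m0 where "m0 = - F'' 1"
  have m0: "m0 > 0" using F''1 by (simp add: m0_def)
  have lo: "\<forall>x. \<bar>x - 1\<bar> \<le> r \<longrightarrow> F 1 + F' 1 * (x - 1) - (3 * m0 / 4) * (x - 1)^2 \<le> F x"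
    using near unfolding m0_def by blast
  have upq: "\<forall>x. \<bar>x - 1\<bar> \<le> r \<longrightarrow> F x \<le> F 1 + F' 1 * (x - 1) - (m0 / 4) * (x - 1)^2"
    using near unfolding m0_def by blast
  have up: "\<forall>x. \<bar>x - 1\<bar> \<le> r \<longrightarrow> F x \<le> F 1 + F' 1 * (x - 1)"
  proof (intro allI impI)
    fix x :: real assume "\<bar>x - 1\<bar> \<le> r"
    then have "F x \<le> F 1 + F' 1 * (x - 1) - (m0 / 4) * (x - 1)^2" using upq by blast
    moreover have "(m0 / 4) * (x - 1)^2 \<ge> 0" using m0 by simp
    ultimately show "F x \<le> F 1 + F' 1 * (x - 1)" by linarith
  qed
  have K0: "3 * m0 / 4 \<ge> 0" using m0 by simp
  have supp: "\<forall>x\<in>{0..lmax}. F x \<le> F 1 + F' 1 * (x - 1)"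
    by (rule support_line[where F=F and F'=F', OF lmax r K0 lo up cl])
  have FS: "Fstar F lmax = F 1"
    by (rule Fstar_eq[of lmax F "F' 1"]) (use lmax Fc i2 F_nonneg supp in auto)
  have a0: "m0 / 4 > 0" using m0 by simp
  obtain c where c: "c > 0" and side: "(\<forall>x\<in>{0..1}. F x \<le> F 1 + F' 1 * (x - 1) - c * (x - 1)^2) \<or>
               (\<forall>x\<in>{1..lmax}. F x \<le> F 1 + F' 1 * (x - 1) - c * (x - 1)^2)"
    using side_gap[where F=F and F'=F', OF lmax r a0 Fc upq supp cl] by blast
  obtain K' where K': "K' \<ge> 0" and lowq: "\<forall>x\<in>{0..lmax}. F 1 + F' 1 * (x - 1) - K' * (x - 1)^2 \<le> F x"
    using lower_quad[where F=F and F'=F', OF lmax r(1) K0 i2 F_nonneg lo] by blast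
  obtain mm :: nat where mm: "mm \<ge> 1" "(1 + 1 / real mm)^2 \<le> lmax" using exists_m[OF lmax] by blast
  define alpha where "alpha = min (F' 1 / 8) (min 1 (c / 8))"
  have al0: "alpha > 0" using i2 c by (simp add: alpha_def)
  have al1: "2 * alpha * (1 / F' 1) \<le> 1/4"
  proof -
    have "alpha \<le> F' 1 / 8" by (simp add: alpha_def)
    then show ?thesis using i2 by (simp add: field_simps)
  qed
  have al2: "2 * alpha^2 * (1 / c) \<le> 1/4"
  proof -
    have "alpha \<le> 1" "alpha \<le> c / 8" by (auto simp: alpha_def)
    have "alpha * alpha \<le> 1 * alpha" using \<open>alpha \<le> 1\<close> al0 by (intro mult_right_mono) auto
    then have "alpha^2 \<le> c / 8" using \<open>alpha \<le> c / 8\<close> by (simp add: power2_eq_square)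
    then show ?thesis using c by (simp add: field_simps)
  qed
  define Cq where "Cq = 3 * (F' 1 * real mm ^ 2 + K' * (18 + real mm ^ 2))"
  have Cq: "Cq > 0" unfolding Cq_def using i2 K' mm by (simp add: add_pos_nonneg)
  define C1 where "C1 = alpha / 12"
  define C2 where "C2 = 2 * sqrt Cq + 2"
  define eps0 where "eps0 = min 1 (alpha^2 / 4)"
  have "\<forall>eps\<in>{0<..eps0}. ennreal (C1 / sqrt eps) \<le> qstar F lmax eps \<and>
                              qstar F lmax eps \<le> ennreal (C2 / sqrt eps)"
  proof
    fix eps assume "eps \<in> {0<..eps0}"
    then have e: "0 < eps" "eps \<le> 1" "eps \<le> alpha^2 / 4" by (auto simp: eps0_def)
    have se: "sqrt eps > 0" "sqrt eps \<le> 1" using e by auto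
    have lower: "ennreal (C1 / sqrt eps) \<le> qstar F lmax eps"
      unfolding qstar_def
    proof (rule INF_greatest)
      fix lam assume "lam \<in> {lam. policy lmax lam \<and> stable lam \<and> regret F lmax lam \<le> eps}"
      then have "policy lmax lam" "stable lam" "regret F lmax lam \<le> eps" by auto
      then show "ennreal (C1 / sqrt eps) \<le> exp_queue lam"
        unfolding C1_def using lb_policy[where F=F and F'=F', OF lmax i2 c FS F_nonneg supp side al0 al1 al2 e] by blast
    qed
    define Kn where "Kn = nat \<lceil>sqrt (Cq / eps)\<rceil>"
    have sq0: "sqrt (Cq / eps) > 0" using Cq e by simp
    have Kge: "real Kn \<ge> sqrt (Cq / eps)" unfolding Kn_def by linarith
    have Kle: "real Kn \<le> sqrt (Cq / eps) + 1" unfolding Kn_def using sq0 by linarith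
    have Kn1: "Kn \<ge> 1" using Kge sq0 unfolding Kn_def by linarith
    have "regret F lmax (tent mm Kn) \<le> Cq / real Kn ^ 2"
      unfolding Cq_def by (rule tent_regret[where F=F and F'=F', OF mm(1) mm(2) Kn1 K' lowq FS i2])
    also have "\<dots> \<le> eps"
    proof -
      have "Cq / eps \<le> (real Kn)^2"
      proof -
        have "(sqrt (Cq / eps))^2 \<le> (real Kn)^2" using Kge sq0 by (intro power_mono) auto
        then show ?thesis using Cq e by simp
      qed
      then show ?thesis using e Kn1 Cq by (simp add: field_simps)
    qed
    finally have regt: "regret F lmax (tent mm Kn) \<le> eps" .
    have "qstar F lmax eps \<le> exp_queue (tent mm Kn)"
      unfolding qstar_def
      by (rule INF_lower) (use tent_policy[OF mm] tent_stable regt in blast)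
    also have "\<dots> \<le> ennreal (2 * real Kn)" by (rule tent_queue[OF mm])
    also have "\<dots> \<le> ennreal (C2 / sqrt eps)"
    proof (rule ennreal_leI)
      have "2 * real Kn \<le> 2 * (sqrt Cq / sqrt eps) + 2" using Kle by (simp add: real_sqrt_divide)
      also have "\<dots> \<le> 2 * (sqrt Cq / sqrt eps) + 2 / sqrt eps" using se by (simp add: field_simps)
      also have "\<dots> = C2 / sqrt eps" unfolding C2_def by (simp add: add_divide_distrib)
      finally show "2 * real Kn \<le> C2 / sqrt eps" .
    qed
    finally show "ennreal (C1 / sqrt eps) \<le> qstar F lmax eps \<and> qstar F lmax eps \<le> ennreal (C2 / sqrt eps)"
      using lower by blast
  qed
  moreover have "C1 > 0" "eps0 > 0" using al0 by (auto simp: C1_def eps0_def)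
  moreover have "sqrt Cq > 0" using Cq by simp
  then have "C2 > 0" unfolding C2_def by linarith
  ultimately show ?thesis by blast
qed


end
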